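(* Let $(a,b)$ be a real interval and let $W$ be a weight matrix of size $N$ on $(a,b)$ (in the sense of the context; finite moments are not required). Let $\{F_n\}_{n\ge0}$ be a sequence of matrix orthogonal functions of size $N$ on $(a,b)$ with respect to $W$. Assume that for all $x\in(a,b)$ and all $n\ge0$ $$xF_n(x)=A_nF_{n-1}(x)+B_nF_n(x)+C_nF_{n+1}(x),$$ where $A_n,B_n,C_n\in M_N(\mathbb C)$ are constant matrices, $A_0=0$ (so the term with $F_{-1}$ is absent) and every $C_n$ is nonsingular. Then: (i) for every $n\ge0$ there is a uniquely determined matrix polynomial $Q_n\in M_N(\mathbb C)[x]$ with $F_n(x)=Q_n(x)F_0(x)$ on $(a,b)$; moreover $\deg Q_n=n$ and the leading coefficient of $Q_n$ is nonsingular; (ii) $W'=F_0WF_0^*$ has all moments $\int_a^b x^kW'(x)\,dx$, $k\ge0$, finite; (iii) $\{Q_n\}_{n\ge0}$ is a sequence of matrix orthogonal polynomials with respect to $W'$, i.e. $\int_a^bQ_i(x)W'(x)Q_j(x)^*\,dx=0$ for $i\neq j$; (iv) $xQ_n=A_nQ_{n-1}+B_nQ_n+C_nQ_{n+1}$ for all $n\ge0$ (with $A_0=0$).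
   Context: For $M\in M_N(\mathbb C)$, $M^*$ denotes the conjugate transpose. A weight matrix of size $N$ on $(a,b)$ (here without requiring finite moments) is an integrable function $W$ on $(a,b)$ (supported in $[a,b]$) such that $W(x)$ is a self-adjoint positive semidefinite $N\times N$ matrix for every $x\in(a,b)$ and positive definite for almost every $x$. A sequence of matrix orthogonal functions with respect to $W$ is a sequence $\{F_n\}_{n\ge0}$ of $M_N(\mathbb C)$-valued functions on $(a,b)$ such that $\det F_0(x)\neq0$ for almost every $x\in(a,b)$, $F_i(x)W(x)F_j(x)^*$ is integrable on $[a,b]$ for all $i,j\ge0$, and $\int_a^bF_i(x)W(x)F_j(x)^*\,dx=0$ for all $i\neq j$. A sequence of matrix orthogonal polynomials with respect to a weight $W'$ is a sequence $\{Q_n\}$ of matrix polynomials with $\deg Q_n=n$, nonsingular leading coefficient, and $\int_a^b Q_iW'Q_j^*\,dx=0$ for $i\ne j$. *)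

theory Defs
  imports "HOL-Analysis.Analysis" "HOL-Computational_Algebra.Polynomial"
begin

text \<open>N x N complex matrices are represented as complex^'n^'n with 'n a finite type, CARD('n) = N.
  Matrix product is (**), nonsingular is invertible.\<close>

definition cadj :: "complex^'n^'m \<Rightarrow> complex^'m^'n" where
  "cadj M = (\<chi> i j. cnj (M $ j $ i))"

definition hermitian :: "complex^'n^'n \<Rightarrow> bool" where
  "hermitian M \<longleftrightarrow> cadj M = M"

definition qform :: "complex^'n^'n \<Rightarrow> complex^'n \<Rightarrow> complex" where
  "qform M v = (\<Sum>i\<in>UNIV. \<Sum>j\<in>UNIV. cnj (v $ i) * M $ i $ j * v $ j)"

definition psd_mat :: "complex^'n^'n \<Rightarrow> bool" where
  "psd_mat M \<longleftrightarrow> hermitian M \<and> (\<forall>v. 0 \<le> Re (qform M v))"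

definition pd_mat :: "complex^'n^'n \<Rightarrow> bool" where
  "pd_mat M \<longleftrightarrow> hermitian M \<and> (\<forall>v. v \<noteq> 0 \<longrightarrow> 0 < Re (qform M v))"

definition oint :: "ereal \<Rightarrow> ereal \<Rightarrow> real set" where
  "oint a b = {x. a < ereal x \<and> ereal x < b}"

definition weight_matrix :: "real set \<Rightarrow> (real \<Rightarrow> complex^'n^'n) \<Rightarrow> bool" where
  "weight_matrix I W \<longleftrightarrow> set_integrable lborel I W \<and> (\<forall>x\<in>I. psd_mat (W x))
     \<and> (AE x in lborel. x \<in> I \<longrightarrow> pd_mat (W x))"

definition matrix_orth_functions ::
  "real set \<Rightarrow> (real \<Rightarrow> complex^'n^'n) \<Rightarrow> (nat \<Rightarrow> real \<Rightarrow> complex^'n^'n) \<Rightarrow> bool" where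
  "matrix_orth_functions I W F \<longleftrightarrow>
     (AE x in lborel. x \<in> I \<longrightarrow> det (F 0 x) \<noteq> 0)
     \<and> (\<forall>i j. set_integrable lborel I (\<lambda>x. F i x ** W x ** cadj (F j x)))
     \<and> (\<forall>i j. i \<noteq> j \<longrightarrow> (LINT x:I|lborel. F i x ** W x ** cadj (F j x)) = 0)"

definition mpeval :: "(complex^'n^'n) poly \<Rightarrow> real \<Rightarrow> complex^'n^'n" where
  "mpeval P x = (\<Sum>k\<le>degree P. (x ^ k) *\<^sub>R coeff P k)"

definition matrix_orth_polys ::
  "real set \<Rightarrow> (real \<Rightarrow> complex^'n^'n) \<Rightarrow> (nat \<Rightarrow> (complex^'n^'n) poly) \<Rightarrow> bool" where
  "matrix_orth_polys I W' Q \<longleftrightarrow>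
     (\<forall>n. degree (Q n) = n \<and> invertible (lead_coeff (Q n)))
     \<and> (\<forall>i j. set_integrable lborel I (\<lambda>x. mpeval (Q i) x ** W' x ** cadj (mpeval (Q j) x)))
     \<and> (\<forall>i j. i \<noteq> j \<longrightarrow>
          (LINT x:I|lborel. mpeval (Q i) x ** W' x ** cadj (mpeval (Q j) x)) = 0)"

end

theory Submission
  imports Defs
begin


lemma matrix_sub_ldistrib: "(M::'a::ring_1^'n^'m) ** (X - Y) = M ** X - M ** Y"
  by (simp add: matrix_matrix_mult_def vec_eq_iff sum_subtractf algebra_simps)

lemma matrix_add_rdistrib: "((X::'a::semiring_1^'n^'m) + Y) ** M = X ** M + Y ** M"
  by (simp add: matrix_matrix_mult_def vec_eq_iff sum.distrib algebra_simps)

lemma matrix_sub_rdistrib: "((X::'a::ring_1^'n^'m) - Y) ** M = X ** M - Y ** M"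
  by (simp add: matrix_matrix_mult_def vec_eq_iff sum_subtractf algebra_simps)

lemma matrix_sum_ldistrib: "(M::'a::semiring_1^'n^'m) ** sum f S = (\<Sum>i\<in>S. M ** f i)"
proof (cases "finite S")
  case True thus ?thesis by (induction S rule: finite_induct) (simp_all add: matrix_add_ldistrib)
qed simp

lemma matrix_scaleR_right: "(M::'a::real_algebra_1^'n^'m) ** (c *\<^sub>R X) = c *\<^sub>R (M ** X)"
  by (simp add: matrix_scalar_ac scalar_matrix_assoc)

lemma inv_props: "invertible (A::'a::semiring_1^'n^'m) \<Longrightarrow> A ** matrix_inv A = mat 1 \<and> matrix_inv A ** A = mat 1"
  unfolding invertible_def matrix_inv_def by (rule someI_ex)

lemma invertible_matrix_inv: "invertible (A::'a::semiring_1^'n^'m) \<Longrightarrow> invertible (matrix_inv A)"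
  using inv_props unfolding invertible_def by blast

lemma invertible_nz: "invertible (A::'a::semiring_1^'n^'m) \<Longrightarrow> A \<noteq> 0"
proof
  assume "invertible A" "A = 0"
  then obtain A' :: "'a^'m^'n" where "A ** A' = mat 1" unfolding invertible_def by blast
  with \<open>A = 0\<close> have "(mat 1 :: 'a^'m^'m) = 0" by simp
  hence "(mat 1 :: 'a^'m^'m) $ undefined $ undefined = 0" by simp
  thus False by (simp add: mat_def)
qed

lemma cadj_mult: "cadj ((X::complex^'n^'m) ** (Y::complex^'p^'n)) = cadj Y ** cadj X"
  by (simp add: cadj_def matrix_matrix_mult_def vec_eq_iff mult.commute)

lemma lmul_bl: "bounded_linear (\<lambda>X::complex^'p^'n. (K::complex^'n^'m) ** X)"
  unfolding linear_conv_bounded_linear[symmetric]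
  by (rule linearI) (simp_all add: matrix_add_ldistrib matrix_scaleR_right)

lemma set_integrable_lmul:
  assumes "set_integrable M I (f :: _ \<Rightarrow> complex^'p^'n)"
  shows "set_integrable M I (\<lambda>x. (K::complex^'n^'m) ** f x)"
  using integrable_bounded_linear[OF lmul_bl[of K] assms[unfolded set_integrable_def]]
  unfolding set_integrable_def by (simp add: matrix_scaleR_right)

definition lmulp :: "complex^'n^'n \<Rightarrow> (complex^'n^'n) poly \<Rightarrow> (complex^'n^'n) poly" where
  "lmulp M P = map_poly (\<lambda>c. M ** c) P"

lemma coeff_lmulp[simp]: "coeff (lmulp M P) k = M ** coeff P k"
  by (simp add: lmulp_def coeff_map_poly)

lemma degree_lmulp: "degree (lmulp M P) \<le> degree P"
  by (rule degree_le) (simp add: coeff_eq_0)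

lemma mpeval_gen: "degree P \<le> m \<Longrightarrow> mpeval P x = (\<Sum>k\<le>m. (x ^ k) *\<^sub>R coeff P k)"
  unfolding mpeval_def
  by (rule sum.mono_neutral_left) (auto simp: coeff_eq_0)

lemma mpeval_add: "mpeval (P + Q) x = mpeval P x + mpeval Q x"
proof -
  let ?m = "max (degree P) (degree Q)"
  show ?thesis
    using mpeval_gen[of "P+Q" ?m x] mpeval_gen[of P ?m x] mpeval_gen[of Q ?m x] degree_add_le[of P ?m Q]
    by (simp add: scaleR_add_right sum.distrib)
qed

lemma mpeval_diff: "mpeval (P - Q) x = mpeval P x - mpeval Q x"
proof -
  let ?m = "max (degree P) (degree Q)"
  show ?thesis
    using mpeval_gen[of "P-Q" ?m x] mpeval_gen[of P ?m x] mpeval_gen[of Q ?m x] degree_diff_le[of P ?m Q]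
    by (simp add: scaleR_diff_right sum_subtractf)
qed

lemma mpeval_lmulp: "mpeval (lmulp M P) x = M ** mpeval P x"
  using mpeval_gen[of "lmulp M P" "degree P" x] degree_lmulp[of M P]
  by (simp add: mpeval_def matrix_sum_ldistrib matrix_scaleR_right)

lemma mpeval_pCons0: "mpeval (pCons 0 P) x = x *\<^sub>R mpeval P x"
proof -
  have "degree (pCons 0 P) \<le> Suc (degree P)" by (simp add: degree_pCons_le)
  hence "mpeval (pCons 0 P) x = (\<Sum>k\<le>Suc (degree P). (x ^ k) *\<^sub>R coeff (pCons 0 P) k)"
    by (rule mpeval_gen)
  also have "\<dots> = (\<Sum>k\<le>degree P. (x ^ Suc k) *\<^sub>R coeff P k)"
    by (subst sum.atMost_Suc_shift) simp
  also have "\<dots> = x *\<^sub>R mpeval P x"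
    by (simp add: mpeval_def scaleR_sum_right)
  finally show ?thesis .
qed

lemma mpeval_const: "mpeval [:c:] x = c"
  by (simp add: mpeval_def)

fun Qp :: "(nat \<Rightarrow> complex^'n^'n) \<Rightarrow> (nat \<Rightarrow> complex^'n^'n) \<Rightarrow> (nat \<Rightarrow> complex^'n^'n) \<Rightarrow> nat \<Rightarrow> (complex^'n^'n) poly" where
  "Qp A B C 0 = [:mat 1:]"
| "Qp A B C (Suc n) = lmulp (matrix_inv (C n))
      (pCons 0 (Qp A B C n) - lmulp (A n) (Qp A B C (n - 1)) - lmulp (B n) (Qp A B C n))"

lemma mpeval_Qp_Suc: "mpeval (Qp A B C (Suc n)) x = matrix_inv (C n) **
   (x *\<^sub>R mpeval (Qp A B C n) x - A n ** mpeval (Qp A B C (n - 1)) x - B n ** mpeval (Qp A B C n) x)"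
  by (simp add: mpeval_lmulp mpeval_diff mpeval_pCons0)

lemma Qp_degree:
  assumes Cinv: "\<And>n. invertible (C n)"
  shows "degree (Qp A B C n) = n \<and> invertible (lead_coeff (Qp A B C n))"
proof (induction n rule: less_induct)
  case (less n)
  show ?case
  proof (cases n)
    case 0
    have "invertible (mat 1 :: complex^'a^'a)" unfolding invertible_def by (intro exI[of _ "mat 1"]) simp
    thus ?thesis using 0 by simp
  next
    case (Suc m)
    have IH1: "degree (Qp A B C m) = m" "invertible (lead_coeff (Qp A B C m))" using less.IH[of m] Suc by auto
    have IH2: "degree (Qp A B C (m - 1)) \<le> m" using less[of "m - 1"] Suc by auto
    have cf: "coeff (Qp A B C (Suc m)) k = matrix_inv (C m) ** (coeff (pCons 0 (Qp A B C m)) k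
       - A m ** coeff (Qp A B C (m - 1)) k - B m ** coeff (Qp A B C m) k)" for k
      by simp
    have hi: "coeff (Qp A B C (Suc m)) k = 0" if km: "k > Suc m" for k
    proof -
      obtain j where j: "k = Suc j" "j > m" using km by (cases k) auto
      show ?thesis unfolding cf using j IH1 IH2 by (simp add: coeff_eq_0)
    qed
    have top: "coeff (Qp A B C (Suc m)) (Suc m) = matrix_inv (C m) ** lead_coeff (Qp A B C m)"
      unfolding cf using IH1 IH2 by (simp add: coeff_eq_0)
    have inv: "invertible (matrix_inv (C m) ** lead_coeff (Qp A B C m))"
      by (rule invertible_mult[OF invertible_matrix_inv[OF Cinv] IH1(2)])
    have deg: "degree (Qp A B C (Suc m)) = Suc m"
      by (rule antisym[OF degree_le le_degree]) (use hi top invertible_nz[OF inv] in auto)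
    show ?thesis using deg top inv Suc by simp
  qed
qed

lemma poly_gen: "degree (p::complex poly) \<le> m \<Longrightarrow> poly p z = (\<Sum>i\<le>m. coeff p i * z ^ i)"
  apply (subst poly_altdef)
  apply (rule sum.mono_neutral_left)
    apply (auto simp: coeff_eq_0)
  done

lemma mpeval_unique:
  fixes P Q :: "(complex^'n^'n) poly"
  assumes inf: "infinite S" and eq: "\<And>x. x \<in> S \<Longrightarrow> mpeval P x = mpeval Q x"
  shows "P = Q"
proof -
  define D where "D = P - Q"
  have D0: "mpeval D x = 0" if "x \<in> S" for x using eq[OF that] by (simp add: D_def mpeval_diff)
  have "coeff D k $ i $ j = 0" for k i j
  proof -
    define p where "p = map_poly (\<lambda>c. c $ i $ j) D"
    have cp: "coeff p k = coeff D k $ i $ j" for k by (simp add: p_def coeff_map_poly)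
    have dp: "degree p \<le> degree D" by (rule degree_le) (simp add: cp coeff_eq_0)
    have "poly p (complex_of_real x) = 0" if "x \<in> S" for x
    proof -
      have "poly p (complex_of_real x) = (\<Sum>k\<le>degree D. coeff p k * complex_of_real x ^ k)"
        by (rule poly_gen[OF dp])
      also have "\<dots> = mpeval D x $ i $ j"
        apply (simp add: mpeval_def cp)
        apply (simp add: scaleR_conv_of_real mult.commute)
        done
      finally show ?thesis using D0[OF that] by simp
    qed
    hence sub: "complex_of_real ` S \<subseteq> {z. poly p z = 0}" by auto
    have "p = 0"
    proof (rule ccontr)
      assume "p \<noteq> 0"
      hence "finite (complex_of_real ` S)" using poly_roots_finite finite_subset sub by blast
      hence "finite S" by (rule finite_imageD) (simp add: inj_on_def)
      thus False using inf by simp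
    qed
    thus ?thesis using cp[of k] by simp
  qed
  hence "coeff D k = 0" for k by (simp add: vec_eq_iff)
  hence "D = 0" by (simp add: poly_eqI)
  thus ?thesis by (simp add: D_def)
qed


theorem theorem2p1:
  fixes a b :: ereal
    and W :: "real \<Rightarrow> complex^'n^'n"
    and F :: "nat \<Rightarrow> real \<Rightarrow> complex^'n^'n"
    and A B C :: "nat \<Rightarrow> complex^'n^'n"
  assumes ab: "a < b"
    and W: "weight_matrix (oint a b) W"
    and F: "matrix_orth_functions (oint a b) W F"
    and rec: "\<And>n x. x \<in> oint a b \<Longrightarrow>
        x *\<^sub>R F n x = A n ** F (n - 1) x + B n ** F n x + C n ** F (Suc n) x"
    and A0: "A 0 = 0"
    and Cinv: "\<And>n. invertible (C n)"
  shows "\<exists>Q :: nat \<Rightarrow> (complex^'n^'n) poly.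
     (\<forall>n. (\<forall>x\<in>oint a b. F n x = mpeval (Q n) x ** F 0 x)
          \<and> (\<forall>P. (\<forall>x\<in>oint a b. F n x = mpeval P x ** F 0 x) \<longrightarrow> P = Q n)
          \<and> degree (Q n) = n \<and> invertible (lead_coeff (Q n)))
   \<and> (\<forall>k::nat. set_integrable lborel (oint a b) (\<lambda>x. (x ^ k) *\<^sub>R (F 0 x ** W x ** cadj (F 0 x))))
   \<and> matrix_orth_polys (oint a b) (\<lambda>x. F 0 x ** W x ** cadj (F 0 x)) Q
   \<and> (\<forall>n (x::real). x *\<^sub>R mpeval (Q n) x
        = A n ** mpeval (Q (n - 1)) x + B n ** mpeval (Q n) x + C n ** mpeval (Q (Suc n)) x)"
proof -
  define I where "I = oint a b"
  define Q where "Q = Qp A B C"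
  have FF: "AE x in lborel. x \<in> I \<longrightarrow> det (F 0 x) \<noteq> 0"
    "\<And>i j. set_integrable lborel I (\<lambda>x. F i x ** W x ** cadj (F j x))"
    "\<And>i j. i \<noteq> j \<Longrightarrow> (LINT x:I|lborel. F i x ** W x ** cadj (F j x)) = 0"
    using F unfolding matrix_orth_functions_def I_def by auto
  have recI: "\<And>n x. x \<in> I \<Longrightarrow> x *\<^sub>R F n x = A n ** F (n - 1) x + B n ** F n x + C n ** F (Suc n) x"
    using rec unfolding I_def by blast
  define S where "S = {x \<in> I. det (F 0 x) \<noteq> 0}"
  have Sinf: "infinite S"
  proof
    assume fin: "finite S"
    obtain c where c: "a < ereal c" "ereal c < b" using ereal_dense2[OF ab] by blast
    obtain d where d: "ereal c < ereal d" "ereal d < b" using ereal_dense2[OF c(2)] by blast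
    have cd: "c < d" using d by simp
    have sub: "{c<..<d} \<subseteq> I"
    proof
      fix x assume "x \<in> {c<..<d}"
      hence "ereal c < ereal x" "ereal x < ereal d" by auto
      moreover have "ereal x < b" using \<open>ereal x < ereal d\<close> d(2) by (rule less_trans)
      ultimately show "x \<in> I" using c d unfolding I_def oint_def by (auto intro: less_trans)
    qed
    have AE2: "AE x in lborel. x \<notin> S" by (rule AE_not_in[OF finite_imp_null_set_lborel[OF fin]])
    have "AE x in lborel. x \<notin> {c<..<d}" using FF(1) AE2
      by eventually_elim (use sub in \<open>auto simp: S_def\<close>)
    hence "emeasure lborel {c<..<d} = 0"
      by (subst (asm) AE_iff_measurable[of "{c<..<d}"]) auto
    thus False using cd by simp
  qed
  have Qrec: "x *\<^sub>R mpeval (Q n) x = A n ** mpeval (Q (n - 1)) x + B n ** mpeval (Q n) x + C n ** mpeval (Q (Suc n)) x" for n x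
  proof -
    have "C n ** mpeval (Q (Suc n)) x = x *\<^sub>R mpeval (Q n) x - A n ** mpeval (Q (n - 1)) x - B n ** mpeval (Q n) x"
      unfolding Q_def mpeval_Qp_Suc matrix_mul_assoc using inv_props[OF Cinv[of n]] by simp
    thus ?thesis by (simp add: algebra_simps)
  qed
  have FQ: "\<forall>x\<in>I. F n x = mpeval (Q n) x ** F 0 x" for n
  proof (induction n rule: less_induct)
    case (less n)
    show ?case
    proof (cases n)
      case 0 thus ?thesis by (simp add: Q_def mpeval_const)
    next
      case (Suc m)
      show ?thesis
      proof
        fix x assume x: "x \<in> I"
        have h1: "F m x = mpeval (Q m) x ** F 0 x" using less.IH[of m] Suc x by auto
        have h2: "F (m - 1) x = mpeval (Q (m - 1)) x ** F 0 x" using less.IH[of "m - 1"] Suc x by auto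
        have "C m ** F (Suc m) x = x *\<^sub>R F m x - A m ** F (m - 1) x - B m ** F m x"
          using recI[OF x, of m] by (simp add: algebra_simps)
        also have "\<dots> = (x *\<^sub>R mpeval (Q m) x - A m ** mpeval (Q (m - 1)) x - B m ** mpeval (Q m) x) ** F 0 x"
          unfolding h1 h2 by (simp add: matrix_add_rdistrib matrix_sub_rdistrib scalar_matrix_assoc matrix_mul_assoc
              algebra_simps)
        also have "\<dots> = (C m ** mpeval (Q (Suc m)) x) ** F 0 x"
          using Qrec[of x m] by (simp add: algebra_simps)
        finally have e: "C m ** F (Suc m) x = C m ** (mpeval (Q (Suc m)) x ** F 0 x)"
          by (simp add: matrix_mul_assoc)
        have "F (Suc m) x = matrix_inv (C m) ** (C m ** F (Suc m) x)"
          using inv_props[OF Cinv[of m]] by (simp add: matrix_mul_assoc)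
        also have "\<dots> = mpeval (Q (Suc m)) x ** F 0 x"
          unfolding e using inv_props[OF Cinv[of m]] by (simp add: matrix_mul_assoc)
        finally show "F n x = mpeval (Q n) x ** F 0 x" using Suc by simp
      qed
    qed
  qed
  have uniq: "P = Q n" if P: "\<forall>x\<in>I. F n x = mpeval P x ** F 0 x" for P n
  proof (rule mpeval_unique[OF Sinf])
    fix x assume x: "x \<in> S"
    hence xI: "x \<in> I" and dx: "det (F 0 x) \<noteq> 0" by (auto simp: S_def)
    have iv: "invertible (F 0 x)" using dx by (simp add: invertible_det_nz)
    have "mpeval P x ** F 0 x = mpeval (Q n) x ** F 0 x" using P FQ[of n] xI by auto
    hence "(mpeval P x ** F 0 x) ** matrix_inv (F 0 x) = (mpeval (Q n) x ** F 0 x) ** matrix_inv (F 0 x)" by simp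
    thus "mpeval P x = mpeval (Q n) x" using inv_props[OF iv] by (simp add: matrix_mul_assoc[symmetric])
  qed
  have mom: "set_integrable lborel I (\<lambda>x. (x ^ k) *\<^sub>R (F n x ** W x ** cadj (F 0 x)))" for k n
  proof (induction k arbitrary: n)
    case 0 thus ?case using FF(2)[of n 0] by simp
  next
    case (Suc k)
    have "set_integrable lborel I (\<lambda>x. A n ** ((x ^ k) *\<^sub>R (F (n - 1) x ** W x ** cadj (F 0 x)))
       + B n ** ((x ^ k) *\<^sub>R (F n x ** W x ** cadj (F 0 x)))
       + C n ** ((x ^ k) *\<^sub>R (F (Suc n) x ** W x ** cadj (F 0 x))))"
      by (intro set_integral_add set_integrable_lmul Suc.IH)
    moreover have "x ^ Suc k *\<^sub>R (F n x ** W x ** cadj (F 0 x)) =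
        A n ** ((x ^ k) *\<^sub>R (F (n - 1) x ** W x ** cadj (F 0 x)))
       + B n ** ((x ^ k) *\<^sub>R (F n x ** W x ** cadj (F 0 x)))
       + C n ** ((x ^ k) *\<^sub>R (F (Suc n) x ** W x ** cadj (F 0 x)))" if x: "x \<in> I" for x
    proof -
      have "x ^ Suc k *\<^sub>R (F n x ** W x ** cadj (F 0 x)) = (x ^ k) *\<^sub>R ((x *\<^sub>R F n x) ** W x ** cadj (F 0 x))"
        by (simp add: scalar_matrix_assoc mult.commute)
      also have "\<dots> = (x ^ k) *\<^sub>R ((A n ** F (n - 1) x + B n ** F n x + C n ** F (Suc n) x) ** W x ** cadj (F 0 x))"
        by (simp add: recI[OF x])
      also have "\<dots> = A n ** ((x ^ k) *\<^sub>R (F (n - 1) x ** W x ** cadj (F 0 x)))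
       + B n ** ((x ^ k) *\<^sub>R (F n x ** W x ** cadj (F 0 x)))
       + C n ** ((x ^ k) *\<^sub>R (F (Suc n) x ** W x ** cadj (F 0 x)))"
        by (simp add: matrix_add_rdistrib matrix_scaleR_right matrix_mul_assoc scaleR_add_right)
      finally show ?thesis .
    qed
    ultimately show ?case
      by (subst set_integrable_cong[OF refl refl]) auto
  qed
  have eqi: "mpeval (Q i) x ** (F 0 x ** W x ** cadj (F 0 x)) ** cadj (mpeval (Q j) x) = F i x ** W x ** cadj (F j x)"
    if x: "x \<in> I" for x i j
    using FQ[of i] FQ[of j] x by (simp add: cadj_mult matrix_mul_assoc)
  have orth: "matrix_orth_polys I (\<lambda>x. F 0 x ** W x ** cadj (F 0 x)) Q"
    unfolding matrix_orth_polys_def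
  proof (intro conjI allI impI)
    fix n show "degree (Q n) = n" "invertible (lead_coeff (Q n))"
      using Qp_degree[where C=C and A=A and B=B, OF Cinv] unfolding Q_def by blast+
  next
    fix i j show "set_integrable lborel I (\<lambda>x. mpeval (Q i) x ** (F 0 x ** W x ** cadj (F 0 x)) ** cadj (mpeval (Q j) x))"
      using FF(2)[of i j] by (subst set_integrable_cong[OF refl refl]) (auto simp: eqi)
  next
    fix i j :: nat assume "i \<noteq> j"
    show "(LINT x:I|lborel. mpeval (Q i) x ** (F 0 x ** W x ** cadj (F 0 x)) ** cadj (mpeval (Q j) x)) = 0"
    proof -
      have "(\<lambda>x. indicator I x *\<^sub>R (mpeval (Q i) x ** (F 0 x ** W x ** cadj (F 0 x)) ** cadj (mpeval (Q j) x)))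
          = (\<lambda>x. indicator I x *\<^sub>R (F i x ** W x ** cadj (F j x)))"
        by (rule ext) (auto simp: indicator_def eqi)
      thus ?thesis using FF(3)[OF \<open>i \<noteq> j\<close>] unfolding set_lebesgue_integral_def by simp
    qed
  qed
  show ?thesis
    apply (rule exI[of _ Q])
    using FQ uniq Qp_degree[where C=C and A=A and B=B, OF Cinv] mom[of _ 0] orth Qrec unfolding I_def Q_def
    by blast
qed

end
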